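(* Let $F(x)=\frac{\sqrt{1-2x+5x^2}+x-1}{2x}$ (a power series with $F(0)=0$), and for $n,k\geq0$ let $t_{n,k}=[x^n]\,\frac{1}{x}F(x)^{k+1}$. Then for all $n\geq 0$, $$m_n=\sum_{k=0}^{n}t_{n,k}\,s_k .$$
   Context: Steps: $U=(1,1)$, $D=(1,-1)$, $h=(1,0)$, $H=(2,0)$. A Motzkin path of length $2n$ is a lattice path from $(0,0)$ to $(2n,0)$ with steps $U,D,h$ never going below the $x$-axis; a Schröder path of length $2n$ is the same with steps $U,D,H$. Such a path is symmetric if it has a vertex with $x$-coordinate $n$ and is invariant under reflection in the line $x=n$ (reversing the step sequence and interchanging $U$ and $D$, keeping horizontal steps, gives the same sequence). $m_n$ = number of symmetric Motzkin paths of length $2n$, $s_n$ = number of symmetric Schröder paths of length $2n$. $[x^n]$ denotes the coefficient of $x^n$. *)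

theory Defs
  imports Complex_Main "HOL-Computational_Algebra.Formal_Power_Series"
begin

datatype step = Up | Dn | Lv | Hz  (* U=(1,1), D=(1,-1), h=(1,0), H=(2,0) *)

fun dy :: "step \<Rightarrow> int" where
  "dy Up = 1" | "dy Dn = -1" | "dy Lv = 0" | "dy Hz = 0"

fun dx :: "step \<Rightarrow> nat" where
  "dx Hz = 2" | "dx _ = 1"

fun mirror :: "step \<Rightarrow> step" where
  "mirror Up = Dn" | "mirror Dn = Up" | "mirror s = s"

definition height :: "step list \<Rightarrow> int" where
  "height xs = (\<Sum>s\<leftarrow>xs. dy s)"

definition width :: "step list \<Rightarrow> nat" where
  "width xs = (\<Sum>s\<leftarrow>xs. dx s)"

definition nonneg_path :: "step list \<Rightarrow> bool" where
  "nonneg_path xs \<longleftrightarrow> (\<forall>i\<le>length xs. height (take i xs) \<ge> 0) \<and> height xs = 0"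

definition motzkin_paths :: "nat \<Rightarrow> step list set" where
  "motzkin_paths n = {xs. set xs \<subseteq> {Up, Dn, Lv} \<and> width xs = 2*n \<and> nonneg_path xs}"

definition schroeder_paths :: "nat \<Rightarrow> step list set" where
  "schroeder_paths n = {xs. set xs \<subseteq> {Up, Dn, Hz} \<and> width xs = 2*n \<and> nonneg_path xs}"

text \<open>Symmetric: a vertex with x-coordinate n, and invariance under reflection in x = n.\<close>
definition symmetric_path :: "nat \<Rightarrow> step list \<Rightarrow> bool" where
  "symmetric_path n xs \<longleftrightarrow> (\<exists>i\<le>length xs. width (take i xs) = n) \<and> rev (map mirror xs) = xs"

definition m_seq :: "nat \<Rightarrow> nat" where
  "m_seq n = card {xs \<in> motzkin_paths n. symmetric_path n xs}"

definition s_seq :: "nat \<Rightarrow> nat" where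
  "s_seq n = card {xs \<in> schroeder_paths n. symmetric_path n xs}"

text \<open>F(x) = (sqrt(1-2x+5x^2) + x - 1)/(2x), with the square root having constant term 1.\<close>
definition F_fps :: "real fps" where
  "F_fps = (fps_radical (\<lambda>_ _. 1) 2 (1 - 2 * fps_X + 5 * fps_X ^ 2) + fps_X - 1) / (2 * fps_X)"

definition t_coeff :: "nat \<Rightarrow> nat \<Rightarrow> real" where
  "t_coeff n k = fps_nth (F_fps ^ (k + 1) / fps_X) n"

end

theory Submission
  imports Defs
begin


lemma F_props: "fps_nth F_fps 0 = 0 \<and> F_fps = fps_X * (1 + F_fps - F_fps^2)"
proof -
  define P :: "real fps" where "P = 1 - 2 * fps_X + 5 * fps_X ^ 2"
  define R where "R = fps_radical (\<lambda>_ _. 1) 2 P"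
  define N where "N = R + fps_X - 1"
  have P0: "fps_nth P 0 = 1" by (simp add: P_def)
  have RR: "R ^ 2 = P"
    using power_radical[of P "\<lambda>_ _. 1" 1] P0 by (simp add: R_def numeral_2_eq_2)
  have R0: "fps_nth R 0 = 1" by (simp add: R_def P0)
  have N0: "fps_nth N 0 = 0" by (simp add: N_def R0)
  define G where "G = fps_shift 1 N"
  have NG: "N = fps_X * G"
    unfolding G_def by (rule fps_ext) (use N0 in \<open>auto\<close>)
  have half: "fps_const (1/2) * (2::real fps) = 1"
    by (rule fps_ext) (simp add: fps_numeral_nth)
  have "F_fps = N / (2 * fps_X)" by (simp add: F_fps_def N_def R_def P_def)
  also have "N = (fps_const (1/2) * G) * (2 * fps_X)"
  proof -
    have "(fps_const (1/2) * G) * (2 * fps_X) = (fps_const (1/2) * 2) * (fps_X * G)" by (simp only: mult_ac)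
    thus ?thesis using half NG by simp
  qed
  also have "\<dots> / (2 * fps_X) = fps_const (1/2) * G"
    by (rule fps_divide_times_eq) simp
  finally have FG: "F_fps = fps_const (1/2) * G" .
  have hN: "2 * fps_X * F_fps = N"
  proof -
    have "2 * fps_X * F_fps = (fps_const (1/2) * 2) * (fps_X * G)" unfolding FG by (simp only: mult_ac)
    thus ?thesis using half NG by simp
  qed
  have RF: "R = 2 * fps_X * F_fps - fps_X + 1" using hN by (simp add: N_def algebra_simps)
  have "4 * fps_X * (F_fps - fps_X * (1 + F_fps - F_fps^2)) = (2 * fps_X * F_fps - fps_X + 1)^2 - P"
    unfolding P_def power2_eq_square by algebra
  also have "\<dots> = 0" using RR RF by simp
  finally have E: "F_fps = fps_X * (1 + F_fps - F_fps^2)" by simp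
  have F0: "fps_nth F_fps 0 = 0" by (subst E) simp
  show ?thesis using E F0 by simp
qed

definition cc :: "nat \<Rightarrow> nat \<Rightarrow> real" where "cc n k = fps_nth (F_fps ^ k) n"

lemma cc_rec: "cc (Suc n) (Suc k) = cc n k + cc n (Suc k) - cc n (Suc (Suc k))"
proof -
  have E: "F_fps = fps_X * (1 + F_fps - F_fps^2)" using F_props by blast
  have "F_fps ^ Suc k = F_fps ^ k * F_fps" by (simp add: mult_ac)
  also have "\<dots> = fps_X * (F_fps ^ k + F_fps ^ Suc k - F_fps ^ Suc (Suc k))"
    by (subst (2) E) (simp add: algebra_simps power2_eq_square)
  finally have EQ: "F_fps ^ Suc k = fps_X * (F_fps ^ k + F_fps ^ Suc k - F_fps ^ Suc (Suc k))" .
  have "fps_nth (F_fps ^ Suc k) (Suc n) = fps_nth (fps_X * (F_fps ^ k + F_fps ^ Suc k - F_fps ^ Suc (Suc k))) (Suc n)"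
    using EQ by (rule arg_cong)
  also have "\<dots> = fps_nth (F_fps ^ k) n + fps_nth (F_fps ^ Suc k) n - fps_nth (F_fps ^ Suc (Suc k)) n"
    by (simp only: fps_X_mult_nth fps_sub_nth fps_add_nth) simp
  finally show ?thesis unfolding cc_def .
qed

lemma cc_0: "cc 0 k = (if k = 0 then 1 else 0)"
  using F_props by (simp add: cc_def fps_power_zeroth)

lemma cc_n0: "cc n 0 = (if n = 0 then 1 else 0)"
  by (simp add: cc_def)

lemma cc_vanish: "n < k \<Longrightarrow> cc n k = 0"
proof (induction n arbitrary: k)
  case 0 thus ?case by (simp add: cc_0)
next
  case (Suc n)
  then obtain k' where k: "k = Suc k'" by (cases k) auto
  show ?case using Suc by (simp add: k cc_rec)
qed

lemma cc_11: "cc 1 1 = 1"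
  using cc_rec[of 0 0] by (simp add: cc_0)

lemma t_cc: "t_coeff n k = cc (Suc n) (Suc k)"
  by (simp add: t_coeff_def cc_def)



lemma height_Nil[simp]: "height [] = 0" by (simp add: height_def)
lemma height_Cons[simp]: "height (x#xs) = dy x + height xs" by (simp add: height_def)
lemma height_append[simp]: "height (xs @ ys) = height xs + height ys" by (simp add: height_def)
lemma width_Nil[simp]: "width [] = 0" by (simp add: width_def)
lemma width_Cons[simp]: "width (x#xs) = dx x + width xs" by (simp add: width_def)
lemma width_append[simp]: "width (xs @ ys) = width xs + width ys" by (simp add: width_def)
lemma dx_pos: "1 \<le> dx s" by (cases s) auto
lemma dy_mirror[simp]: "dy (mirror s) = - dy s" by (cases s) auto
lemma dx_mirror[simp]: "dx (mirror s) = dx s" by (cases s) auto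
lemma mirror_mirror[simp]: "mirror (mirror s) = s" by (cases s) auto
lemma height_rev[simp]: "height (rev xs) = height xs" by (induction xs) auto
lemma width_rev[simp]: "width (rev xs) = width xs" by (induction xs) auto
lemma height_mirror[simp]: "height (map mirror xs) = - height xs" by (induction xs) auto
lemma width_mirror[simp]: "width (map mirror xs) = width xs" by (induction xs) auto
lemma length_le_width: "length xs \<le> width xs"
  by (induction xs) (simp_all add: add_mono[OF dx_pos, simplified])
lemma height_le_length: "height xs \<le> int (length xs)"
proof (induction xs)
  case (Cons x xs) thus ?case by (cases x) auto
qed simp
lemma width_0: "width xs = 0 \<longleftrightarrow> xs = []"
proof
  assume "width xs = 0" thus "xs = []" using length_le_width[of xs] by simp
qed simp

lemma split_unique: "a @ b = c @ d \<Longrightarrow> width a = width c \<Longrightarrow> a = c"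
proof (induction a arbitrary: c)
  case Nil thus ?case by (simp add: width_0)
next
  case (Cons x a)
  have "c \<noteq> []" using Cons.prems(2) dx_pos[of x] by auto
  then obtain y c' where c: "c = y # c'" by (cases c) auto
  then show ?case using Cons by auto
qed

definition pnn :: "step list \<Rightarrow> bool" where
  "pnn xs \<longleftrightarrow> (\<forall>i\<le>length xs. height (take i xs) \<ge> 0)"

lemma pnn_snoc: "pnn (xs @ [s]) \<longleftrightarrow> pnn xs \<and> height xs + dy s \<ge> 0"
proof
  assume a: "pnn (xs @ [s])"
  have "pnn xs" unfolding pnn_def
  proof (intro allI impI)
    fix i assume "i \<le> length xs"
    thus "height (take i xs) \<ge> 0" using a[unfolded pnn_def, rule_format, of i] by simp
  qed
  moreover have "height xs + dy s \<ge> 0" using a[unfolded pnn_def, rule_format, of "Suc (length xs)"] by simp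
  ultimately show "pnn xs \<and> height xs + dy s \<ge> 0" by simp
next
  assume a: "pnn xs \<and> height xs + dy s \<ge> 0"
  show "pnn (xs @ [s])" unfolding pnn_def
  proof (intro allI impI)
    fix i assume i: "i \<le> length (xs @ [s])"
    show "height (take i (xs @ [s])) \<ge> 0"
    proof (cases "i \<le> length xs")
      case True thus ?thesis using a unfolding pnn_def by simp
    next
      case False
      hence "take i (xs @ [s]) = xs @ [s]" using i by simp
      thus ?thesis using a by simp
    qed
  qed
qed

definition halfs :: "step set \<Rightarrow> nat \<Rightarrow> step list set" where
  "halfs S w = {p. set p \<subseteq> S \<and> width p = w \<and> pnn p}"

definition cnt :: "step set \<Rightarrow> nat \<Rightarrow> int \<Rightarrow> nat" where
  "cnt S w j = card {p \<in> halfs S w. height p = j}"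

lemma finite_halfs: "finite S \<Longrightarrow> finite (halfs S w)"
proof (rule finite_subset[OF _ finite_lists_length_le[of S w]])
  show "halfs S w \<subseteq> {xs. set xs \<subseteq> S \<and> length xs \<le> w}"
    unfolding halfs_def using length_le_width by fastforce
qed

lemma halfs_height: "p \<in> halfs S w \<Longrightarrow> 0 \<le> height p \<and> height p \<le> int w"
proof -
  assume p: "p \<in> halfs S w"
  hence "0 \<le> height (take (length p) p)" unfolding halfs_def pnn_def by blast
  moreover have "height p \<le> int w" using p height_le_length[of p] length_le_width[of p] by (simp add: halfs_def)
  ultimately show ?thesis by simp
qed

lemma cnt_neg: "j < 0 \<Longrightarrow> cnt S w j = 0"
proof -
  assume j: "j < 0"
  have E: "{p \<in> halfs S w. height p = j} = {}" using halfs_height j by force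
  show ?thesis by (simp only: cnt_def E card.empty)
qed

lemma cnt_big: "int w < j \<Longrightarrow> cnt S w j = 0"
proof -
  assume j: "int w < j"
  have E: "{p \<in> halfs S w. height p = j} = {}" using halfs_height j by force
  show ?thesis by (simp only: cnt_def E card.empty)
qed

lemma cnt_0: "cnt S 0 j = (if j = 0 then 1 else 0)"
proof -
  have H: "halfs S 0 = {[]}" unfolding halfs_def pnn_def by (auto simp: width_0)
  have "{p \<in> halfs S 0. height p = j} = (if j = 0 then {[]} else {})" unfolding H by auto
  thus ?thesis unfolding cnt_def by simp
qed

lemma cnt_rec:
  assumes "finite S" "0 \<le> j" "1 \<le> w"
  shows "cnt S w j = (\<Sum>s\<in>S. if dx s \<le> w then cnt S (w - dx s) (j - dy s) else 0)"
proof -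
  define T where "T s = {q \<in> halfs S (w - dx s). height q = j - dy s}" for s
  have eq: "{p \<in> halfs S w. height p = j} = (\<Union>s\<in>{s\<in>S. dx s \<le> w}. (\<lambda>q. q @ [s]) ` T s)"
  proof (intro equalityI subsetI)
    fix p assume p: "p \<in> {p \<in> halfs S w. height p = j}"
    hence "p \<noteq> []" using assms(3) by (auto simp: halfs_def)
    then obtain q s where ps: "p = q @ [s]" by (cases p rule: rev_exhaust) auto
    show "p \<in> (\<Union>s\<in>{s\<in>S. dx s \<le> w}. (\<lambda>q. q @ [s]) ` T s)"
      using p by (auto simp: ps T_def halfs_def pnn_snoc)
  next
    fix p assume "p \<in> (\<Union>s\<in>{s\<in>S. dx s \<le> w}. (\<lambda>q. q @ [s]) ` T s)"
    then obtain s q where s: "s \<in> S" "dx s \<le> w" and q: "q \<in> T s" and ps: "p = q @ [s]" by auto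
    show "p \<in> {p \<in> halfs S w. height p = j}"
      using s q assms(2) by (auto simp: ps T_def halfs_def pnn_snoc)
  qed
  have "cnt S w j = card (\<Union>s\<in>{s\<in>S. dx s \<le> w}. (\<lambda>q. q @ [s]) ` T s)"
    unfolding cnt_def eq ..
  also have "\<dots> = (\<Sum>s\<in>{s\<in>S. dx s \<le> w}. card ((\<lambda>q. q @ [s]) ` T s))"
    by (rule card_UN_disjoint) (use assms(1) finite_halfs in \<open>auto simp: T_def\<close>)
  also have "\<dots> = (\<Sum>s\<in>{s\<in>S. dx s \<le> w}. cnt S (w - dx s) (j - dy s))"
    by (rule sum.cong) (auto simp: card_image inj_on_def T_def cnt_def)
  also have "\<dots> = (\<Sum>s\<in>S. if dx s \<le> w then cnt S (w - dx s) (j - dy s) else 0)"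
    by (simp add: sum.inter_filter assms(1))
  finally show ?thesis .
qed

lemma card_halfs: "finite S \<Longrightarrow> card (halfs S w) = (\<Sum>j\<in>{0..int w}. cnt S w j)"
proof -
  assume S: "finite S"
  have E: "halfs S w = (\<Union>j\<in>{0..int w}. {p \<in> halfs S w. height p = j})"
    using halfs_height by fastforce
  have "card (halfs S w) = card (\<Union>j\<in>{0..int w}. {p \<in> halfs S w. height p = j})"
    using E by simp
  also have "\<dots> = (\<Sum>j\<in>{0..int w}. card {p \<in> halfs S w. height p = j})"
    by (rule card_UN_disjoint) (use finite_halfs[OF S] in auto)
  finally show ?thesis unfolding cnt_def .
qed


lemma mirror_in: "Up \<in> S \<Longrightarrow> Dn \<in> S \<Longrightarrow> s \<in> S \<Longrightarrow> mirror s \<in> S"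
  by (cases s) auto

lemma sym_card:
  assumes U: "Up \<in> S" and D: "Dn \<in> S"
  shows "card {xs \<in> {xs. set xs \<subseteq> S \<and> width xs = 2*n \<and> nonneg_path xs}. symmetric_path n xs}
         = card (halfs S n)"
proof -
  define f where "f p = p @ rev (map mirror p)" for p
  have inj: "inj_on f (halfs S n)"
  proof (rule inj_onI)
    fix p q assume "p \<in> halfs S n" "q \<in> halfs S n" "f p = f q"
    thus "p = q" using split_unique[of p "rev (map mirror p)" q "rev (map mirror q)"] by (simp add: f_def halfs_def)
  qed
  have eq: "{xs \<in> {xs. set xs \<subseteq> S \<and> width xs = 2*n \<and> nonneg_path xs}. symmetric_path n xs} = f ` halfs S n"
  proof (intro equalityI subsetI)
    fix xs assume xs: "xs \<in> {xs \<in> {xs. set xs \<subseteq> S \<and> width xs = 2*n \<and> nonneg_path xs}. symmetric_path n xs}"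
    hence setx: "set xs \<subseteq> S" and wx: "width xs = 2*n" and nnx: "nonneg_path xs" and syx: "symmetric_path n xs"
      by simp_all
    obtain i where i: "i \<le> length xs" "width (take i xs) = n" and sy: "rev (map mirror xs) = xs"
      using syx unfolding symmetric_path_def by blast
    define p where "p = take i xs"
    define q where "q = drop i xs"
    have xpq: "xs = p @ q" by (simp add: p_def q_def)
    have wp: "width p = n" using i(2) by (simp add: p_def)
    have "width xs = width p + width q" using xpq by simp
    hence wq: "width q = n" using wx wp by simp
    have "p @ q = xs" using xpq by simp
    also have "xs = rev (map mirror xs)" using sy by simp
    also have "\<dots> = rev (map mirror q) @ rev (map mirror p)" by (simp add: xpq)
    finally have "p @ q = rev (map mirror q) @ rev (map mirror p)" .
    hence "p = rev (map mirror q)" by (rule split_unique) (simp add: wq wp)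
    hence qp: "q = rev (map mirror p)" by (simp add: rev_map comp_def)
    have "p \<in> halfs S n"
      unfolding halfs_def pnn_def
    proof (intro CollectI conjI allI impI)
      show "set p \<subseteq> S" using setx set_take_subset[of i xs] unfolding p_def by blast
      show "width p = n" using wp .
      fix k assume "k \<le> length p"
      hence "take k p = take k xs" by (simp add: xpq)
      moreover have "k \<le> length xs" using \<open>k \<le> length p\<close> xpq by simp
      ultimately show "0 \<le> height (take k p)" using nnx unfolding nonneg_path_def by simp
    qed
    thus "xs \<in> f ` halfs S n" using xpq qp f_def by auto
  next
    fix xs assume "xs \<in> f ` halfs S n"
    then obtain p where p: "p \<in> halfs S n" and xs: "xs = p @ rev (map mirror p)" unfolding f_def by auto
    have setp: "set p \<subseteq> S" and wp: "width p = n" and pn: "pnn p" using p by (auto simp: halfs_def)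
    have "set xs \<subseteq> S" using setp mirror_in[OF U D] by (auto simp: xs)
    moreover have "width xs = 2*n" by (simp add: xs wp)
    moreover have "nonneg_path xs" unfolding nonneg_path_def
    proof (intro conjI allI impI)
      show "height xs = 0" by (simp add: xs)
      fix i assume i: "i \<le> length xs"
      show "0 \<le> height (take i xs)"
      proof (cases "i \<le> length p")
        case True thus ?thesis using pn unfolding pnn_def by (simp add: xs)
      next
        case False
        define d where "d = length p - (i - length p)"
        have dle: "d \<le> length p" by (simp add: d_def)
        have "take i xs = p @ take (i - length p) (rev (map mirror p))" using False by (simp add: xs)
        also have "take (i - length p) (rev (map mirror p)) = rev (map mirror (drop d p))"
          by (simp add: take_rev d_def drop_map)
        finally have "height (take i xs) = height p - height (drop d p)" by simp
        also have "\<dots> = height (take d p)"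
          using height_append[of "take d p" "drop d p"] by simp
        finally show ?thesis using pn dle unfolding pnn_def by simp
      qed
    qed
    moreover have "symmetric_path n xs" unfolding symmetric_path_def
    proof
      show "\<exists>i\<le>length xs. width (take i xs) = n"
        by (rule exI[of _ "length p"]) (simp add: xs wp)
      show "rev (map mirror xs) = xs" by (simp add: xs rev_map comp_def)
    qed
    ultimately show "xs \<in> {xs \<in> {xs. set xs \<subseteq> S \<and> width xs = 2*n \<and> nonneg_path xs}. symmetric_path n xs}"
      by simp
  qed
  show ?thesis unfolding eq using inj by (rule card_image)
qed

lemma m_seq_cnt: "m_seq n = (\<Sum>j\<in>{0..int n}. cnt {Up, Dn, Lv} n j)"
  unfolding m_seq_def motzkin_paths_def
  by (subst sym_card) (auto simp: card_halfs)

lemma s_seq_cnt: "s_seq n = (\<Sum>j\<in>{0..int n}. cnt {Up, Dn, Hz} n j)"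
  unfolding s_seq_def schroeder_paths_def
  by (subst sym_card) (auto simp: card_halfs)

lemma a_rec: "0 \<le> j \<Longrightarrow> cnt {Up, Dn, Lv} (Suc n) j = cnt {Up, Dn, Lv} n (j - 1) + cnt {Up, Dn, Lv} n (j + 1) + cnt {Up, Dn, Lv} n j"
  by (subst cnt_rec) auto

lemma b_rec: "0 \<le> j \<Longrightarrow> cnt {Up, Dn, Hz} (Suc n) j = cnt {Up, Dn, Hz} n (j - 1) + cnt {Up, Dn, Hz} n (j + 1) + (if n = 0 then 0 else cnt {Up, Dn, Hz} (n - 1) j)"
  by (subst cnt_rec) auto



abbreviation "SM \<equiv> {Up, Dn, Lv}"
abbreviation "SS \<equiv> {Up, Dn, Hz}"
definition aa :: "nat \<Rightarrow> int \<Rightarrow> real" where "aa n j = real (cnt SM n j)"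
definition bb :: "nat \<Rightarrow> int \<Rightarrow> real" where "bb n j = real (cnt SS n j)"
definition AA :: "nat \<Rightarrow> int \<Rightarrow> real" where "AA n j = (\<Sum>k<Suc n. cc (Suc n) (Suc k) * bb k j)"

lemma trunc: "(\<Sum>k<Suc n + d. cc (Suc n) (Suc k) * g k) = (\<Sum>k<Suc n. cc (Suc n) (Suc k) * g k)"
  by (induction d) (auto simp: cc_vanish)

lemma AA_ext: "Suc n \<le> N \<Longrightarrow> (\<Sum>k<N. cc (Suc n) (Suc k) * bb k j) = AA n j"
  unfolding AA_def using trunc[where n=n and d="N - Suc n" and g="\<lambda>k. bb k j"] by simp

lemma AA_eq: "AA n j = aa n j"
proof (induction n arbitrary: j)
  case 0
  have "cc (Suc 0) (Suc 0) = 1" using cc_11 by simp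
  thus ?case by (simp add: AA_def aa_def bb_def cnt_0)
next
  case (Suc n)
  show ?case
  proof (cases "j < 0")
    case True thus ?thesis by (simp add: AA_def aa_def bb_def cnt_neg)
  next
    case False
    hence j: "0 \<le> j" by simp
    define c where "c = cc (Suc n)"
    define b' where "b' k = (if k = 0 then 0 else bb (k - 1) j)" for k
    have "AA (Suc n) j = (\<Sum>k<Suc (Suc (Suc n)). cc (Suc (Suc n)) (Suc k) * bb k j)"
      by (rule AA_ext[symmetric]) simp
    also have "\<dots> = (\<Sum>k<Suc (Suc (Suc n)). c k * bb k j) + (\<Sum>k<Suc (Suc (Suc n)). c (Suc k) * bb k j) - (\<Sum>k<Suc (Suc (Suc n)). c (Suc (Suc k)) * bb k j)"
    proof -
      have h: "\<And>k. cc (Suc (Suc n)) (Suc k) * bb k j = c k * bb k j + c (Suc k) * bb k j - c (Suc (Suc k)) * bb k j"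
        by (simp only: c_def cc_rec algebra_simps)
      show ?thesis by (simp only: h sum.distrib sum_subtractf)
    qed
    also have "(\<Sum>k<Suc (Suc (Suc n)). c k * bb k j) = (\<Sum>k<Suc (Suc n). c (Suc k) * bb (Suc k) j)"
      by (subst sum.lessThan_Suc_shift) (simp add: c_def cc_n0 del: sum.lessThan_Suc)
    also have "(\<Sum>k<Suc (Suc (Suc n)). c (Suc k) * bb k j) = (\<Sum>k<Suc (Suc n). c (Suc k) * bb k j)"
      by (simp add: c_def cc_vanish)
    also have "(\<Sum>k<Suc (Suc (Suc n)). c (Suc (Suc k)) * bb k j) = (\<Sum>k<Suc (Suc n). c (Suc k) * b' k)"
    proof -
      have "(\<Sum>k<Suc (Suc n). c (Suc k) * b' k) = (\<Sum>k<Suc n. c (Suc (Suc k)) * bb k j)"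
        by (subst sum.lessThan_Suc_shift) (simp add: b'_def del: sum.lessThan_Suc)
      moreover have "(\<Sum>k<Suc (Suc (Suc n)). c (Suc (Suc k)) * bb k j) = (\<Sum>k<Suc n. c (Suc (Suc k)) * bb k j)"
        by (simp add: c_def cc_vanish)
      ultimately show ?thesis by simp
    qed
    also have "(\<Sum>k<Suc (Suc n). c (Suc k) * bb (Suc k) j) + (\<Sum>k<Suc (Suc n). c (Suc k) * bb k j) - (\<Sum>k<Suc (Suc n). c (Suc k) * b' k)
        = (\<Sum>k<Suc (Suc n). c (Suc k) * (bb (Suc k) j + bb k j - b' k))"
      by (simp add: algebra_simps sum.distrib sum_subtractf)
    also have "\<dots> = (\<Sum>k<Suc (Suc n). c (Suc k) * (bb k (j - 1) + bb k (j + 1) + bb k j))"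
      by (rule sum.cong) (auto simp: bb_def b_rec[OF j] b'_def)
    also have "\<dots> = (\<Sum>k<Suc (Suc n). c (Suc k) * bb k (j - 1)) + (\<Sum>k<Suc (Suc n). c (Suc k) * bb k (j + 1)) + (\<Sum>k<Suc (Suc n). c (Suc k) * bb k j)"
      by (simp add: algebra_simps sum.distrib)
    also have "\<dots> = AA n (j - 1) + AA n (j + 1) + AA n j"
      unfolding c_def by (simp only: AA_ext le_SucI order_refl)
    also have "\<dots> = aa (Suc n) j"
      by (simp add: Suc.IH aa_def a_rec[OF j])
    finally show ?thesis .
  qed
qed

theorem theorem3p6:
  fixes n :: nat
  shows "real (m_seq n) = (\<Sum>k=0..n. t_coeff n k * real (s_seq k))"
proof -
  have "(\<Sum>k=0..n. t_coeff n k * real (s_seq k)) = (\<Sum>k<Suc n. cc (Suc n) (Suc k) * (\<Sum>j\<in>{0..int n}. bb k j))"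
  proof -
    have "(\<Sum>k=0..n. t_coeff n k * real (s_seq k)) = (\<Sum>k<Suc n. t_coeff n k * real (s_seq k))"
      by (simp add: atLeast0AtMost lessThan_Suc_atMost)
    also have "\<dots> = (\<Sum>k<Suc n. cc (Suc n) (Suc k) * (\<Sum>j\<in>{0..int n}. bb k j))"
    proof (rule sum.cong[OF refl])
      fix k assume "k \<in> {..<Suc n}"
      hence kn: "k \<le> n" by simp
      have "real (s_seq k) = (\<Sum>j\<in>{0..int k}. bb k j)"
        by (simp add: s_seq_cnt bb_def)
      also have "\<dots> = (\<Sum>j\<in>{0..int n}. bb k j)"
        by (rule sum.mono_neutral_left) (use kn in \<open>auto simp: bb_def cnt_big\<close>)
      finally show "t_coeff n k * real (s_seq k) = cc (Suc n) (Suc k) * (\<Sum>j\<in>{0..int n}. bb k j)"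
        by (simp add: t_cc)
    qed
    finally show ?thesis .
  qed
  also have "\<dots> = (\<Sum>j\<in>{0..int n}. AA n j)"
    unfolding AA_def sum_distrib_left by (rule sum.swap)
  also have "\<dots> = (\<Sum>j\<in>{0..int n}. aa n j)" by (simp add: AA_eq)
  also have "\<dots> = real (m_seq n)" by (simp add: m_seq_cnt aa_def)
  finally show ?thesis ..
qed

end
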